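(* (1) Let $K\ge2$ and $N>K$, and let $F\in\mathcal F_K$ have (at least) two identical columns. Then there are $Q^1,Q^2\in\mathcal Q_K^{\mathrm{ua}}$ with $FQ^1=FQ^2$ but $(F,Q^1)\not\sim(F,Q^2)$. (2) Let $K\ge2$ and $N\ge1$, and let $Q\in\mathcal Q_K\setminus\mathcal Q_K^{\mathrm{ua}}$ be such that every column of $Q$ is of the form $e_j$ for some $j$, but for some $k$, $e_k$ is not a column of $Q$. Then for every $F\in\mathcal F_K^{\mathrm d}$ there is $F^2\in\mathcal F_K^{\mathrm d}$ with $FQ=F^2Q$ but $(F,Q)\not\sim(F^2,Q)$.
   Context: Fix positive integers $M$ and $N$. For a positive integer $K$, $\mathcal F_K$ is the set of real $M\times K$ matrices with all entries in $[0,1]$, and $\mathcal Q_K$ is the set of real $K\times N$ matrices with entries in $[0,1]$ each of whose columns sums to $1$. $e_k$ is the $k$-th standard basis vector of $\mathbb R^K$. $\mathcal F_K^{\mathrm d}$ is the set of $F\in\mathcal F_K$ whose columns are mutually different. $\mathcal Q_K^{\mathrm{ua}}$ is the set of $Q\in\mathcal Q_K$ such that every column equals some $e_j$ and every $e_j$, $j\in\{1,\dots,K\}$, occurs as a column. $(F^1,Q^1)\sim(F^2,Q^2)$ means $F^1,F^2$ have the same number $K$ of columns and there is a permutation $\pi$ of $\{1,\dots,K\}$ with $F^2_{sk}=F^1_{s\pi(k)}$ and $Q^2_{ki}=Q^1_{\pi(k)i}$ for all $s,k,i$. *)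

theory Defs
  imports Main "HOL.Real"
begin

text \<open>Matrices are functions nat => nat => real, indexed from 0; only entries with
indices in range (rows < M, columns < K, etc.) are meaningful.\<close>

definition inF :: "nat \<Rightarrow> nat \<Rightarrow> (nat \<Rightarrow> nat \<Rightarrow> real) \<Rightarrow> bool" where
  "inF M K F \<longleftrightarrow> (\<forall>s<M. \<forall>k<K. 0 \<le> F s k \<and> F s k \<le> 1)"

definition inQ :: "nat \<Rightarrow> nat \<Rightarrow> (nat \<Rightarrow> nat \<Rightarrow> real) \<Rightarrow> bool" where
  "inQ K N Q \<longleftrightarrow> (\<forall>k<K. \<forall>i<N. 0 \<le> Q k i \<and> Q k i \<le> 1) \<and> (\<forall>i<N. (\<Sum>k<K. Q k i) = 1)"

definition col_is_e :: "nat \<Rightarrow> (nat \<Rightarrow> nat \<Rightarrow> real) \<Rightarrow> nat \<Rightarrow> nat \<Rightarrow> bool" where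
  "col_is_e K Q i j \<longleftrightarrow> (\<forall>k<K. Q k i = (if k = j then 1 else 0))"

definition inQua :: "nat \<Rightarrow> nat \<Rightarrow> (nat \<Rightarrow> nat \<Rightarrow> real) \<Rightarrow> bool" where
  "inQua K N Q \<longleftrightarrow> inQ K N Q \<and> (\<forall>i<N. \<exists>j<K. col_is_e K Q i j)
                    \<and> (\<forall>j<K. \<exists>i<N. col_is_e K Q i j)"

definition inFd :: "nat \<Rightarrow> nat \<Rightarrow> (nat \<Rightarrow> nat \<Rightarrow> real) \<Rightarrow> bool" where
  "inFd M K F \<longleftrightarrow> inF M K F \<and> (\<forall>k<K. \<forall>l<K. k \<noteq> l \<longrightarrow> (\<exists>s<M. F s k \<noteq> F s l))"

definition matmul :: "nat \<Rightarrow> (nat \<Rightarrow> nat \<Rightarrow> real) \<Rightarrow> (nat \<Rightarrow> nat \<Rightarrow> real) \<Rightarrow> nat \<Rightarrow> nat \<Rightarrow> real" where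
  "matmul K F Q s i = (\<Sum>k<K. F s k * Q k i)"

definition prod_eq :: "nat \<Rightarrow> nat \<Rightarrow> nat \<Rightarrow> (nat \<Rightarrow> nat \<Rightarrow> real) \<Rightarrow> (nat \<Rightarrow> nat \<Rightarrow> real)
    \<Rightarrow> (nat \<Rightarrow> nat \<Rightarrow> real) \<Rightarrow> (nat \<Rightarrow> nat \<Rightarrow> real) \<Rightarrow> bool" where
  "prod_eq M N K F1 Q1 F2 Q2 \<longleftrightarrow> (\<forall>s<M. \<forall>i<N. matmul K F1 Q1 s i = matmul K F2 Q2 s i)"

definition equivFQ :: "nat \<Rightarrow> nat \<Rightarrow> nat \<Rightarrow> (nat \<Rightarrow> nat \<Rightarrow> real) \<Rightarrow> (nat \<Rightarrow> nat \<Rightarrow> real)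
    \<Rightarrow> (nat \<Rightarrow> nat \<Rightarrow> real) \<Rightarrow> (nat \<Rightarrow> nat \<Rightarrow> real) \<Rightarrow> bool" where
  "equivFQ M N K F1 Q1 F2 Q2 \<longleftrightarrow> (\<exists>\<pi>. bij_betw \<pi> {..<K} {..<K}
      \<and> (\<forall>s<M. \<forall>k<K. F2 s k = F1 s (\<pi> k))
      \<and> (\<forall>k<K. \<forall>i<N. Q2 k i = Q1 (\<pi> k) i))"

end

theory Submission
  imports Defs
begin

lemma sum_ind: "j < (K::nat) \<Longrightarrow> (\<Sum>x<K. (if x = j then 1 else 0::real)) = 1"
  by (simp add: sum.delta)

lemma part1:
  fixes M N K :: nat and F :: "nat \<Rightarrow> nat \<Rightarrow> real"
  assumes "K < N" "k < K" "l < K" "k \<noteq> l" "\<forall>s<M. F s k = F s l"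
  shows "\<exists>Q1 Q2. inQua K N Q1 \<and> inQua K N Q2 \<and> prod_eq M N K F Q1 F Q2
                     \<and> \<not> equivFQ M N K F Q1 F Q2"
proof -
  define Q1 where "Q1 = (\<lambda>j i. if i < K then (if j = i then 1 else 0) else (if j = k then 1 else (0::real)))"
  define Q2 where "Q2 = (\<lambda>j i. if i < K then (if j = i then 1 else 0) else (if j = l then 1 else (0::real)))"
  have q1: "inQua K N Q1"
  proof -
    have "(\<Sum>j<K. Q1 j i) = 1" for i
      using assms by (cases "i < K") (simp_all add: Q1_def sum_ind)
    moreover have "\<forall>i<N. \<exists>j<K. col_is_e K Q1 i j"
    proof (intro allI impI)
      fix i assume "i < N"
      show "\<exists>j<K. col_is_e K Q1 i j"
      proof (cases "i < K")
        case True then show ?thesis unfolding col_is_e_def Q1_def by auto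
      next
        case False then show ?thesis using assms unfolding col_is_e_def Q1_def by auto
      qed
    qed
    moreover have "\<forall>j<K. \<exists>i<N. col_is_e K Q1 i j"
    proof (intro allI impI)
      fix j assume "j < K"
      then show "\<exists>i<N. col_is_e K Q1 i j" using assms
        by (intro exI[of _ j]) (auto simp: col_is_e_def Q1_def)
    qed
    moreover have "\<forall>k<K. \<forall>i<N. 0 \<le> Q1 k i \<and> Q1 k i \<le> 1" by (auto simp: Q1_def)
    ultimately show ?thesis
      unfolding inQua_def inQ_def by blast
  qed
  have q2: "inQua K N Q2"
  proof -
    have "(\<Sum>j<K. Q2 j i) = 1" for i
      using assms by (cases "i < K") (simp_all add: Q2_def sum_ind)
    moreover have "\<forall>i<N. \<exists>j<K. col_is_e K Q2 i j"
    proof (intro allI impI)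
      fix i assume "i < N"
      show "\<exists>j<K. col_is_e K Q2 i j"
      proof (cases "i < K")
        case True then show ?thesis unfolding col_is_e_def Q2_def by auto
      next
        case False then show ?thesis using assms unfolding col_is_e_def Q2_def by auto
      qed
    qed
    moreover have "\<forall>j<K. \<exists>i<N. col_is_e K Q2 i j"
    proof (intro allI impI)
      fix j assume "j < K"
      then show "\<exists>i<N. col_is_e K Q2 i j" using assms
        by (intro exI[of _ j]) (auto simp: col_is_e_def Q2_def)
    qed
    moreover have "\<forall>k<K. \<forall>i<N. 0 \<le> Q2 k i \<and> Q2 k i \<le> 1" by (auto simp: Q2_def)
    ultimately show ?thesis
      unfolding inQua_def inQ_def by blast
  qed
  have pe: "prod_eq M N K F Q1 F Q2"
    unfolding prod_eq_def matmul_def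
  proof (intro allI impI)
    fix s i assume s: "s < M" and "i < N"
    have d: "(\<Sum>j<K. F s j * (if j = a then 1 else 0)) = F s a" if "a < K" for a
      using that by (simp add: if_distrib sum.delta cong: if_cong)
    show "(\<Sum>j<K. F s j * Q1 j i) = (\<Sum>j<K. F s j * Q2 j i)"
    proof (cases "i < K")
      case True then show ?thesis by (simp add: Q1_def Q2_def)
    next
      case False then show ?thesis using d[of k] d[of l] assms s by (simp add: Q1_def Q2_def)
    qed
  qed
  have ne: "\<not> equivFQ M N K F Q1 F Q2"
  proof
    assume "equivFQ M N K F Q1 F Q2"
    then obtain \<pi> where b: "bij_betw \<pi> {..<K} {..<K}"
      and q: "\<forall>k<K. \<forall>i<N. Q2 k i = Q1 (\<pi> k) i" unfolding equivFQ_def by blast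
    have "\<pi> l = l"
    proof -
      have "Q2 l l = Q1 (\<pi> l) l" using q assms by auto
      thus ?thesis unfolding Q1_def Q2_def using assms by (auto split: if_splits)
    qed
    moreover have "Q2 l K = Q1 (\<pi> l) K" using q assms by auto
    ultimately show False unfolding Q1_def Q2_def using assms by auto
  qed
  show ?thesis using q1 q2 pe ne by blast
qed

lemma part2:
  fixes M N K :: nat and F Q :: "nat \<Rightarrow> nat \<Rightarrow> real"
  assumes M: "0 < M" and cols: "\<forall>i<N. \<exists>j<K. col_is_e K Q i j"
    and kK: "k < K" and nk: "\<forall>i<N. \<not> col_is_e K Q i k" and Fd: "inFd M K F"
  shows "\<exists>F2. inFd M K F2 \<and> prod_eq M N K F Q F2 Q \<and> \<not> equivFQ M N K F Q F2 Q"
proof -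
  have "infinite ({0..1::real} - F 0 ` {..<K})" by (intro Diff_infinite_finite) auto
  then obtain c where c: "c \<in> {0..1::real}" "c \<notin> F 0 ` {..<K}"
    using infinite_imp_nonempty by blast
  define F2 where "F2 = (\<lambda>s j. if j = k \<and> s = 0 then c else F s j)"
  have Qk: "\<forall>i<N. Q k i = 0"
  proof (intro allI impI)
    fix i assume "i < N"
    then obtain j where "j < K" "col_is_e K Q i j" using cols by blast
    moreover have "j \<noteq> k" using nk \<open>i<N\<close> calculation by blast
    ultimately show "Q k i = 0" using kK unfolding col_is_e_def by auto
  qed
  have fd2: "inFd M K F2"
    unfolding inFd_def inF_def
  proof (intro conjI allI impI)
    fix s j assume "s < M" "j < K"
    then show "0 \<le> F2 s j" "F2 s j \<le> 1" using Fd c unfolding F2_def inFd_def inF_def by auto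
  next
    fix j j' assume a: "j < K" "j' < K" "j \<noteq> j'"
    show "\<exists>s<M. F2 s j \<noteq> F2 s j'"
    proof (cases "j = k \<or> j' = k")
      case True
      then show ?thesis using a c M unfolding F2_def
        by (intro exI[of _ 0]) (auto simp: image_iff)
    next
      case False
      then obtain s where "s < M" "F s j \<noteq> F s j'" using Fd a unfolding inFd_def by blast
      then show ?thesis using False unfolding F2_def by auto
    qed
  qed
  have pe: "prod_eq M N K F Q F2 Q"
    unfolding prod_eq_def matmul_def
  proof (intro allI impI)
    fix s i assume "s < M" "i < N"
    show "(\<Sum>j<K. F s j * Q j i) = (\<Sum>j<K. F2 s j * Q j i)"
      using Qk \<open>i < N\<close> by (intro sum.cong) (auto simp: F2_def)
  qed
  have ne: "\<not> equivFQ M N K F Q F2 Q"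
  proof
    assume "equivFQ M N K F Q F2 Q"
    then obtain \<pi> where b: "bij_betw \<pi> {..<K} {..<K}"
      and f: "\<forall>s<M. \<forall>j<K. F2 s j = F s (\<pi> j)" unfolding equivFQ_def by blast
    have "F2 0 k = F 0 (\<pi> k)" using f M kK by auto
    moreover have "\<pi> k < K" using b kK by (auto dest: bij_betwE)
    ultimately show False using c unfolding F2_def by auto
  qed
  show ?thesis using fd2 pe ne by blast
qed

theorem mainTheorem8:
  fixes M N :: nat
  assumes "0 < M" and "0 < N"
  shows "(\<forall>K F. 2 \<le> K \<longrightarrow> K < N \<longrightarrow> inF M K F
            \<longrightarrow> (\<exists>k<K. \<exists>l<K. k \<noteq> l \<and> (\<forall>s<M. F s k = F s l))
            \<longrightarrow> (\<exists>Q1 Q2. inQua K N Q1 \<and> inQua K N Q2 \<and> prod_eq M N K F Q1 F Q2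
                     \<and> \<not> equivFQ M N K F Q1 F Q2))
       \<and> (\<forall>K Q. 2 \<le> K \<longrightarrow> 1 \<le> N \<longrightarrow> inQ K N Q \<longrightarrow> \<not> inQua K N Q
            \<longrightarrow> (\<forall>i<N. \<exists>j<K. col_is_e K Q i j)
            \<longrightarrow> (\<exists>k<K. \<forall>i<N. \<not> col_is_e K Q i k)
            \<longrightarrow> (\<forall>F. inFd M K F \<longrightarrow>
                  (\<exists>F2. inFd M K F2 \<and> prod_eq M N K F Q F2 Q \<and> \<not> equivFQ M N K F Q F2 Q)))"
proof (intro conjI allI impI)
  fix K F assume "2 \<le> K" "K < N" "inF M K F"
    and "\<exists>k<K. \<exists>l<K. k \<noteq> l \<and> (\<forall>s<M. F s k = F s l)"
  then obtain k l where "k < K" "l < K" "k \<noteq> l" "\<forall>s<M. F s k = F s l" by blast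
  then show "\<exists>Q1 Q2. inQua K N Q1 \<and> inQua K N Q2 \<and> prod_eq M N K F Q1 F Q2
                     \<and> \<not> equivFQ M N K F Q1 F Q2"
    using part1[OF \<open>K < N\<close>] by blast
next
  fix K Q F assume "\<forall>i<N. \<exists>j<K. col_is_e K Q i j"
    and "\<exists>k<K. \<forall>i<N. \<not> col_is_e K Q i k" and "inFd M K F"
  then obtain k where "k < K" "\<forall>i<N. \<not> col_is_e K Q i k" by blast
  then show "\<exists>F2. inFd M K F2 \<and> prod_eq M N K F Q F2 Q \<and> \<not> equivFQ M N K F Q F2 Q"
    using part2[OF assms(1) \<open>\<forall>i<N. \<exists>j<K. col_is_e K Q i j\<close> _ _ \<open>inFd M K F\<close>] by blast
qed

end
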